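(* Let $P : E \to B$ be a functor between finite categories which is both fibered in groupoids and cofibered in groupoids. Let $B = \coprod_i B_i$ be the decomposition of $B$ into connected components, and let $F_i$ be the fiber category $P^{-1}(b)$ over an object $b$ of $B_i$. If $E$ and each $B_i$ have Euler characteristics, then \[ \chi(E) = \sum_i \chi(B_i)\,\chi(F_i). \]
   Context: Matrices and Euler characteristic: for finite sets $I,J$ and $\zeta : I\times J \to \mathbb{Q}$, a weighting is $k^{\bullet} : J \to \mathbb{Q}$ with $\sum_j \zeta(i,j)k^j = 1$ for all $i$; a coweighting is $k_{\bullet} : I\to\mathbb{Q}$ with $\sum_i k_i\zeta(i,j)=1$ for all $j$. $\zeta$ has Euler characteristic if it has both, and then $|\zeta| = \sum_j k^j = \sum_i k_i$. A finite category $A$ has similarity matrix $\zeta_A(x,y) = \#A(x,y)$; $A$ has Euler characteristic if $\zeta_A$ does, and $\chi(A) = |\zeta_A|$. A morphism $f : e \to e'$ in $E$ is cartesian if for every $g : e'' \to e'$ and every $h : P(e'') \to P(e)$ with $P(f)\circ h = P(g)$ there is a unique $\tilde h : e'' \to e$ with $P(\tilde h) = h$ and $f\circ\tilde h = g$. $P$ is fibered in groupoids if every morphism of $E$ is cartesian and every morphism $f : b \to P(e)$ in $B$ has a lift $\tilde f : e' \to e$ with $P(\tilde f)=f$; cofibered in groupoids is the dual notion. The fiber category $P^{-1}(b)$ has objects $e$ with $P(e)=b$ and morphisms $f$ with $P(f)=\mathrm{id}_b$; over a connected component all fibers are equivalent. *)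

theory Defs
  imports Main "HOL.Rat"
begin

definition weighting :: "'i set \<Rightarrow> 'j set \<Rightarrow> ('i \<Rightarrow> 'j \<Rightarrow> rat) \<Rightarrow> ('j \<Rightarrow> rat) \<Rightarrow> bool" where
  "weighting I J \<zeta> k \<longleftrightarrow> (\<forall>i\<in>I. (\<Sum>j\<in>J. \<zeta> i j * k j) = 1)"

definition coweighting :: "'i set \<Rightarrow> 'j set \<Rightarrow> ('i \<Rightarrow> 'j \<Rightarrow> rat) \<Rightarrow> ('i \<Rightarrow> rat) \<Rightarrow> bool" where
  "coweighting I J \<zeta> k \<longleftrightarrow> (\<forall>j\<in>J. (\<Sum>i\<in>I. k i * \<zeta> i j) = 1)"

definition has_euler_mat :: "'i set \<Rightarrow> 'j set \<Rightarrow> ('i \<Rightarrow> 'j \<Rightarrow> rat) \<Rightarrow> bool" where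
  "has_euler_mat I J \<zeta> \<longleftrightarrow> (\<exists>k. weighting I J \<zeta> k) \<and> (\<exists>k. coweighting I J \<zeta> k)"

text \<open>Magnitude: sum of a weighting (independent of the choice when both a weighting
  and a coweighting exist).\<close>
definition euler_mat :: "'i set \<Rightarrow> 'j set \<Rightarrow> ('i \<Rightarrow> 'j \<Rightarrow> rat) \<Rightarrow> rat" where
  "euler_mat I J \<zeta> = (\<Sum>j\<in>J. (SOME k. weighting I J \<zeta> k) j)"

record ('o, 'a) cat =
  Ob :: "'o set"
  Ar :: "'a set"
  Dom :: "'a \<Rightarrow> 'o"
  Cod :: "'a \<Rightarrow> 'o"
  Id :: "'o \<Rightarrow> 'a"
  Comp :: "'a \<Rightarrow> 'a \<Rightarrow> 'a"  (* Comp C g f = g \<circ> f *)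

definition category :: "('o, 'a, 'x) cat_scheme \<Rightarrow> bool" where
  "category C \<longleftrightarrow>
     (\<forall>f\<in>Ar C. Dom C f \<in> Ob C \<and> Cod C f \<in> Ob C) \<and>
     (\<forall>x\<in>Ob C. Id C x \<in> Ar C \<and> Dom C (Id C x) = x \<and> Cod C (Id C x) = x) \<and>
     (\<forall>f\<in>Ar C. \<forall>g\<in>Ar C. Cod C f = Dom C g \<longrightarrow>
        Comp C g f \<in> Ar C \<and> Dom C (Comp C g f) = Dom C f \<and> Cod C (Comp C g f) = Cod C g) \<and>
     (\<forall>f\<in>Ar C. Comp C (Id C (Cod C f)) f = f \<and> Comp C f (Id C (Dom C f)) = f) \<and>
     (\<forall>f\<in>Ar C. \<forall>g\<in>Ar C. \<forall>h\<in>Ar C. Cod C f = Dom C g \<longrightarrow> Cod C g = Dom C h \<longrightarrow>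
        Comp C h (Comp C g f) = Comp C (Comp C h g) f)"

definition finite_category :: "('o, 'a, 'x) cat_scheme \<Rightarrow> bool" where
  "finite_category C \<longleftrightarrow> category C \<and> finite (Ob C) \<and> finite (Ar C)"

definition hom :: "('o, 'a, 'x) cat_scheme \<Rightarrow> 'o \<Rightarrow> 'o \<Rightarrow> 'a set" where
  "hom C x y = {f \<in> Ar C. Dom C f = x \<and> Cod C f = y}"

definition zeta :: "('o, 'a, 'x) cat_scheme \<Rightarrow> 'o \<Rightarrow> 'o \<Rightarrow> rat" where
  "zeta C x y = of_nat (card (hom C x y))"

definition has_euler_cat :: "('o, 'a, 'x) cat_scheme \<Rightarrow> bool" where
  "has_euler_cat C \<longleftrightarrow> has_euler_mat (Ob C) (Ob C) (zeta C)"

definition chi :: "('o, 'a, 'x) cat_scheme \<Rightarrow> rat" where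
  "chi C = euler_mat (Ob C) (Ob C) (zeta C)"

definition is_functor :: "('o, 'a, 'x) cat_scheme \<Rightarrow> ('p, 'b, 'y) cat_scheme \<Rightarrow>
    ('o \<Rightarrow> 'p) \<Rightarrow> ('a \<Rightarrow> 'b) \<Rightarrow> bool" where
  "is_functor C D Fo Fa \<longleftrightarrow>
     (\<forall>x\<in>Ob C. Fo x \<in> Ob D) \<and>
     (\<forall>f\<in>Ar C. Fa f \<in> Ar D \<and> Dom D (Fa f) = Fo (Dom C f) \<and> Cod D (Fa f) = Fo (Cod C f)) \<and>
     (\<forall>x\<in>Ob C. Fa (Id C x) = Id D (Fo x)) \<and>
     (\<forall>f\<in>Ar C. \<forall>g\<in>Ar C. Cod C f = Dom C g \<longrightarrow> Fa (Comp C g f) = Comp D (Fa g) (Fa f))"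

definition cartesian :: "('o, 'a, 'x) cat_scheme \<Rightarrow> ('p, 'b, 'y) cat_scheme \<Rightarrow>
    ('o \<Rightarrow> 'p) \<Rightarrow> ('a \<Rightarrow> 'b) \<Rightarrow> 'a \<Rightarrow> bool" where
  "cartesian E B Fo Fa f \<longleftrightarrow> f \<in> Ar E \<and>
     (\<forall>g\<in>Ar E. \<forall>h\<in>Ar B. Cod E g = Cod E f \<longrightarrow>
        Dom B h = Fo (Dom E g) \<longrightarrow> Cod B h = Fo (Dom E f) \<longrightarrow> Comp B (Fa f) h = Fa g \<longrightarrow>
        (\<exists>!h'. h' \<in> Ar E \<and> Dom E h' = Dom E g \<and> Cod E h' = Dom E f \<and>
               Fa h' = h \<and> Comp E f h' = g))"

definition cocartesian :: "('o, 'a, 'x) cat_scheme \<Rightarrow> ('p, 'b, 'y) cat_scheme \<Rightarrow>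
    ('o \<Rightarrow> 'p) \<Rightarrow> ('a \<Rightarrow> 'b) \<Rightarrow> 'a \<Rightarrow> bool" where
  "cocartesian E B Fo Fa f \<longleftrightarrow> f \<in> Ar E \<and>
     (\<forall>g\<in>Ar E. \<forall>h\<in>Ar B. Dom E g = Dom E f \<longrightarrow>
        Dom B h = Fo (Cod E f) \<longrightarrow> Cod B h = Fo (Cod E g) \<longrightarrow> Comp B h (Fa f) = Fa g \<longrightarrow>
        (\<exists>!h'. h' \<in> Ar E \<and> Dom E h' = Cod E f \<and> Cod E h' = Cod E g \<and>
               Fa h' = h \<and> Comp E h' f = g))"

definition fibered_in_groupoids :: "('o, 'a, 'x) cat_scheme \<Rightarrow> ('p, 'b, 'y) cat_scheme \<Rightarrow>
    ('o \<Rightarrow> 'p) \<Rightarrow> ('a \<Rightarrow> 'b) \<Rightarrow> bool" where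
  "fibered_in_groupoids E B Fo Fa \<longleftrightarrow>
     (\<forall>f\<in>Ar E. cartesian E B Fo Fa f) \<and>
     (\<forall>e\<in>Ob E. \<forall>f\<in>Ar B. Cod B f = Fo e \<longrightarrow>
        (\<exists>f'\<in>Ar E. Cod E f' = e \<and> Fa f' = f))"

definition cofibered_in_groupoids :: "('o, 'a, 'x) cat_scheme \<Rightarrow> ('p, 'b, 'y) cat_scheme \<Rightarrow>
    ('o \<Rightarrow> 'p) \<Rightarrow> ('a \<Rightarrow> 'b) \<Rightarrow> bool" where
  "cofibered_in_groupoids E B Fo Fa \<longleftrightarrow>
     (\<forall>f\<in>Ar E. cocartesian E B Fo Fa f) \<and>
     (\<forall>e\<in>Ob E. \<forall>f\<in>Ar B. Dom B f = Fo e \<longrightarrow>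
        (\<exists>f'\<in>Ar E. Dom E f' = e \<and> Fa f' = f))"

definition fiber :: "('o, 'a, 'x) cat_scheme \<Rightarrow> ('p, 'b, 'y) cat_scheme \<Rightarrow>
    ('o \<Rightarrow> 'p) \<Rightarrow> ('a \<Rightarrow> 'b) \<Rightarrow> 'p \<Rightarrow> ('o, 'a, 'x) cat_scheme" where
  "fiber E B Fo Fa b = E\<lparr>Ob := {e \<in> Ob E. Fo e = b}, Ar := {f \<in> Ar E. Fa f = Id B b}\<rparr>"

definition full_sub :: "('o, 'a, 'x) cat_scheme \<Rightarrow> 'o set \<Rightarrow> ('o, 'a, 'x) cat_scheme" where
  "full_sub C S = C\<lparr>Ob := S, Ar := {f \<in> Ar C. Dom C f \<in> S \<and> Cod C f \<in> S}\<rparr>"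

definition conn_rel :: "('o, 'a, 'x) cat_scheme \<Rightarrow> ('o \<times> 'o) set" where
  "conn_rel C = {(x, y). x \<in> Ob C \<and> y \<in> Ob C \<and>
      (\<exists>f\<in>Ar C. (Dom C f = x \<and> Cod C f = y) \<or> (Dom C f = y \<and> Cod C f = x))}"

definition components :: "('o, 'a, 'x) cat_scheme \<Rightarrow> 'o set set" where
  "components C = Ob C // ((conn_rel C)\<^sup>*)"

end

theory Submission
  imports Defs
begin


lemma weight_coweight_sum:
  assumes "finite I" "finite J" "weighting I J z k" "coweighting I J z c"
  shows "(\<Sum>j\<in>J. k j) = (\<Sum>i\<in>I. c i)"
proof -
  have "(\<Sum>j\<in>J. k j) = (\<Sum>j\<in>J. (\<Sum>i\<in>I. c i * z i j) * k j)"
    using assms(4) by (simp add: coweighting_def)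
  also have "\<dots> = (\<Sum>j\<in>J. \<Sum>i\<in>I. c i * (z i j * k j))"
    by (simp add: sum_distrib_right mult.assoc)
  also have "\<dots> = (\<Sum>i\<in>I. \<Sum>j\<in>J. c i * (z i j * k j))"
    by (rule sum.swap)
  also have "\<dots> = (\<Sum>i\<in>I. c i * (\<Sum>j\<in>J. z i j * k j))"
    by (simp add: sum_distrib_left)
  also have "\<dots> = (\<Sum>i\<in>I. c i)"
    using assms(3) by (simp add: weighting_def)
  finally show ?thesis .
qed

lemma euler_mat_eq:
  assumes "finite I" "finite J" "has_euler_mat I J z" "weighting I J z k"
  shows "euler_mat I J z = (\<Sum>j\<in>J. k j)"
proof -
  from assms(3) obtain c where c: "coweighting I J z c" and ex: "\<exists>k. weighting I J z k"
    unfolding has_euler_mat_def by blast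
  have w: "weighting I J z (SOME k. weighting I J z k)" using ex by (rule someI_ex)
  show ?thesis unfolding euler_mat_def
    using weight_coweight_sum[OF assms(1,2) w c] weight_coweight_sum[OF assms(1,2) assms(4) c]
    by simp
qed

lemma card_group:
  assumes "finite S" "finite T" "g ` S \<subseteq> T"
  shows "card S = (\<Sum>y\<in>T. card {x \<in> S. g x = y})"
  using sum.group[OF assms, of "\<lambda>_. 1::nat"] by simp

locale fibsetup =
  fixes E :: "('o, 'a) cat" and B :: "('p, 'b) cat"
    and Fo :: "'o \<Rightarrow> 'p" and Fa :: "'a \<Rightarrow> 'b"
  assumes fE: "finite_category E" and fB: "finite_category B"
    and F: "is_functor E B Fo Fa"
    and fib: "fibered_in_groupoids E B Fo Fa"
    and cofib: "cofibered_in_groupoids E B Fo Fa"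
begin

lemma finE: "finite (Ob E)" "finite (Ar E)" using fE by (auto simp: finite_category_def)
lemma finB: "finite (Ob B)" "finite (Ar B)" using fB by (auto simp: finite_category_def)

lemma catE: "category E" using fE by (simp add: finite_category_def)
lemma catB: "category B" using fB by (simp add: finite_category_def)

lemma E_dc: "f \<in> Ar E \<Longrightarrow> Dom E f \<in> Ob E" "f \<in> Ar E \<Longrightarrow> Cod E f \<in> Ob E"
  using catE by (auto simp: category_def)
lemma E_id: "x \<in> Ob E \<Longrightarrow> Id E x \<in> Ar E" "x \<in> Ob E \<Longrightarrow> Dom E (Id E x) = x"
  "x \<in> Ob E \<Longrightarrow> Cod E (Id E x) = x"
  using catE by (auto simp: category_def)
lemma E_comp: "f \<in> Ar E \<Longrightarrow> g \<in> Ar E \<Longrightarrow> Cod E f = Dom E g \<Longrightarrow> Comp E g f \<in> Ar E"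
  "f \<in> Ar E \<Longrightarrow> g \<in> Ar E \<Longrightarrow> Cod E f = Dom E g \<Longrightarrow> Dom E (Comp E g f) = Dom E f"
  "f \<in> Ar E \<Longrightarrow> g \<in> Ar E \<Longrightarrow> Cod E f = Dom E g \<Longrightarrow> Cod E (Comp E g f) = Cod E g"
  using catE unfolding category_def by blast+
lemma B_dc: "f \<in> Ar B \<Longrightarrow> Dom B f \<in> Ob B" "f \<in> Ar B \<Longrightarrow> Cod B f \<in> Ob B"
  using catB by (auto simp: category_def)
lemma B_id: "x \<in> Ob B \<Longrightarrow> Id B x \<in> Ar B" "x \<in> Ob B \<Longrightarrow> Dom B (Id B x) = x"
  "x \<in> Ob B \<Longrightarrow> Cod B (Id B x) = x"
  using catB by (auto simp: category_def)
lemma B_idl: "f \<in> Ar B \<Longrightarrow> Comp B (Id B (Cod B f)) f = f"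
  and B_idr: "f \<in> Ar B \<Longrightarrow> Comp B f (Id B (Dom B f)) = f"
  using catB unfolding category_def by blast+
lemma F_ob: "x \<in> Ob E \<Longrightarrow> Fo x \<in> Ob B" using F by (simp add: is_functor_def)
lemma F_ar: "f \<in> Ar E \<Longrightarrow> Fa f \<in> Ar B" "f \<in> Ar E \<Longrightarrow> Dom B (Fa f) = Fo (Dom E f)"
  "f \<in> Ar E \<Longrightarrow> Cod B (Fa f) = Fo (Cod E f)"
  using F by (auto simp: is_functor_def)
lemma F_id: "x \<in> Ob E \<Longrightarrow> Fa (Id E x) = Id B (Fo x)" using F by (simp add: is_functor_def)
lemma F_comp: "f \<in> Ar E \<Longrightarrow> g \<in> Ar E \<Longrightarrow> Cod E f = Dom E g \<Longrightarrow> Fa (Comp E g f) = Comp B (Fa g) (Fa f)"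
  using F unfolding is_functor_def by blast

lemma cocart: "f \<in> Ar E \<Longrightarrow> cocartesian E B Fo Fa f"
  using cofib by (simp add: cofibered_in_groupoids_def)
lemma cart: "f \<in> Ar E \<Longrightarrow> cartesian E B Fo Fa f"
  using fib by (simp add: fibered_in_groupoids_def)
lemma cofib_lift: "e \<in> Ob E \<Longrightarrow> u \<in> Ar B \<Longrightarrow> Dom B u = Fo e \<Longrightarrow> \<exists>f\<in>Ar E. Dom E f = e \<and> Fa f = u"
  using cofib by (simp add: cofibered_in_groupoids_def)
lemma fib_lift: "e \<in> Ob E \<Longrightarrow> u \<in> Ar B \<Longrightarrow> Cod B u = Fo e \<Longrightarrow> \<exists>f\<in>Ar E. Cod E f = e \<and> Fa f = u"
  using fib by (simp add: fibered_in_groupoids_def)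

lemma FidL: "g \<in> Ar E \<Longrightarrow> Comp B (Id B (Fo (Cod E g))) (Fa g) = Fa g"
  by (metis B_idl F_ar(1,3))
lemma FidR: "g \<in> Ar E \<Longrightarrow> Comp B (Fa g) (Id B (Fo (Dom E g))) = Fa g"
  by (metis B_idr F_ar(1,2))

definition D :: "'o \<Rightarrow> nat" where
  "D e = card {f \<in> Ar E. Dom E f = e \<and> Fa f = Id B (Fo e)}"
definition C :: "'o \<Rightarrow> nat" where
  "C e = card {f \<in> Ar E. Cod E f = e \<and> Fa f = Id B (Fo e)}"

lemma cocart_count:
  assumes g: "g \<in> Ar E"
  shows "card {g2 \<in> Ar E. Dom E g2 = Dom E g \<and> Fa g2 = Fa g} = D (Cod E g)"
proof -
  let ?b = "Fo (Cod E g)"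
  let ?H = "{h \<in> Ar E. Dom E h = Cod E g \<and> Fa h = Id B ?b}"
  let ?G = "{g2 \<in> Ar E. Dom E g2 = Dom E g \<and> Fa g2 = Fa g}"
  have b: "?b \<in> Ob B" using g by (simp add: E_dc F_ob)
  have cg: "cocartesian E B Fo Fa g" using g by (rule cocart)
  have key: "\<exists>!h'. h' \<in> Ar E \<and> Dom E h' = Cod E g \<and> Cod E h' = Cod E g2 \<and>
               Fa h' = Id B ?b \<and> Comp E h' g = g2" if g2: "g2 \<in> ?G" for g2
  proof -
    have "Fo (Cod E g2) = ?b" using g2 g by (metis (mono_tags, lifting) F_ar(3) mem_Collect_eq)
    moreover have "Comp B (Id B ?b) (Fa g) = Fa g2"
      using g g2 by (metis (mono_tags, lifting) B_idl F_ar(1,3) mem_Collect_eq)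
    ultimately show ?thesis using cg g2 b B_id unfolding cocartesian_def by auto
  qed
  have "bij_betw (\<lambda>h. Comp E h g) ?H ?G"
  proof (rule bij_betwI')
    fix h1 h2 assume h1: "h1 \<in> ?H" and h2: "h2 \<in> ?H"
    show "(Comp E h1 g = Comp E h2 g) = (h1 = h2)"
    proof
      assume eq: "Comp E h1 g = Comp E h2 g"
      have inG: "Comp E h1 g \<in> ?G"
        using h1 g by (auto simp: E_comp F_comp F_ar FidL)
      have p1: "h1 \<in> Ar E \<and> Dom E h1 = Cod E g \<and> Cod E h1 = Cod E (Comp E h1 g) \<and>
               Fa h1 = Id B (Fo (Cod E g)) \<and> Comp E h1 g = Comp E h1 g"
        using h1 g by (simp add: E_comp)
      have p2: "h2 \<in> Ar E \<and> Dom E h2 = Cod E g \<and> Cod E h2 = Cod E (Comp E h1 g) \<and>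
               Fa h2 = Id B (Fo (Cod E g)) \<and> Comp E h2 g = Comp E h1 g"
        using h2 g eq by (simp add: E_comp)
      show "h1 = h2"
        using key[OF inG] p1 p2 by blast
    qed simp
  next
    fix h assume h: "h \<in> ?H"
    show "Comp E h g \<in> ?G" using h g by (auto simp: E_comp F_comp F_ar FidL)
  next
    fix g2 assume "g2 \<in> ?G"
    then show "\<exists>h\<in>?H. g2 = Comp E h g" using key by blast
  qed
  then show ?thesis unfolding D_def by (simp add: bij_betw_same_card)
qed


lemma cart_count:
  assumes g: "g \<in> Ar E"
  shows "card {g2 \<in> Ar E. Cod E g2 = Cod E g \<and> Fa g2 = Fa g} = C (Dom E g)"
proof -
  let ?b = "Fo (Dom E g)"
  let ?H = "{h \<in> Ar E. Cod E h = Dom E g \<and> Fa h = Id B ?b}"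
  let ?G = "{g2 \<in> Ar E. Cod E g2 = Cod E g \<and> Fa g2 = Fa g}"
  have b: "?b \<in> Ob B" using g by (simp add: E_dc F_ob)
  have cg: "cartesian E B Fo Fa g" using g by (rule cart)
  have key: "\<exists>!h'. h' \<in> Ar E \<and> Dom E h' = Dom E g2 \<and> Cod E h' = Dom E g \<and>
               Fa h' = Id B ?b \<and> Comp E g h' = g2" if g2: "g2 \<in> ?G" for g2
  proof -
    have "Fo (Dom E g2) = ?b" using g2 g by (metis (mono_tags, lifting) F_ar(2) mem_Collect_eq)
    moreover have "Comp B (Fa g) (Id B ?b) = Fa g2"
      using g g2 FidR by auto
    ultimately show ?thesis using cg g2 b B_id unfolding cartesian_def by auto
  qed
  have "bij_betw (\<lambda>h. Comp E g h) ?H ?G"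
  proof (rule bij_betwI')
    fix h1 h2 assume h1: "h1 \<in> ?H" and h2: "h2 \<in> ?H"
    show "(Comp E g h1 = Comp E g h2) = (h1 = h2)"
    proof
      assume eq: "Comp E g h1 = Comp E g h2"
      have inG: "Comp E g h1 \<in> ?G"
        using h1 g by (auto simp: E_comp F_comp F_ar FidR)
      have p1: "h1 \<in> Ar E \<and> Dom E h1 = Dom E (Comp E g h1) \<and> Cod E h1 = Dom E g \<and>
               Fa h1 = Id B ?b \<and> Comp E g h1 = Comp E g h1"
        using h1 g by (simp add: E_comp)
      have p2: "h2 \<in> Ar E \<and> Dom E h2 = Dom E (Comp E g h1) \<and> Cod E h2 = Dom E g \<and>
               Fa h2 = Id B ?b \<and> Comp E g h2 = Comp E g h1"
        using h2 g eq by (simp add: E_comp)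
      show "h1 = h2"
        using key[OF inG] p1 p2 by blast
    qed simp
  next
    fix h assume h: "h \<in> ?H"
    show "Comp E g h \<in> ?G" using h g by (auto simp: E_comp F_comp F_ar FidR)
  next
    fix g2 assume "g2 \<in> ?G"
    then show "\<exists>h\<in>?H. g2 = Comp E g h" using key by blast
  qed
  then show ?thesis unfolding C_def by (simp add: bij_betw_same_card)
qed

lemma D_pos: "e \<in> Ob E \<Longrightarrow> D e > 0"
  unfolding D_def using finE(2) E_id[of e] F_id[of e]
  by (subst card_gt_0_iff) auto

lemma C_pos: "e \<in> Ob E \<Longrightarrow> C e > 0"
  unfolding C_def using finE(2) E_id[of e] F_id[of e]
  by (subst card_gt_0_iff) auto

lemma fib_inv:
  assumes f: "f \<in> Ar E" and fa: "Fa f = Id B (Fo (Dom E f))"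
  shows "D (Dom E f) = D (Cod E f)" "C (Dom E f) = C (Cod E f)"
proof -
  have ob: "Fo (Dom E f) \<in> Ob B" using f by (simp add: E_dc F_ob)
  have eq: "Fo (Cod E f) = Fo (Dom E f)"
    using F_ar(3)[OF f] fa B_id(3)[OF ob] by simp
  show "D (Dom E f) = D (Cod E f)"
    using cocart_count[OF f] unfolding D_def by (simp add: fa)
  show "C (Dom E f) = C (Cod E f)"
    using cart_count[OF f] unfolding C_def by (simp add: fa eq)
qed

definition SD :: "'p \<Rightarrow> rat" where
  "SD b = (\<Sum>e\<in>{e \<in> Ob E. Fo e = b}. 1 / of_nat (D e))"
definition SC :: "'p \<Rightarrow> rat" where
  "SC b = (\<Sum>e\<in>{e \<in> Ob E. Fo e = b}. 1 / of_nat (C e))"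

lemma fiber_Ob: "Ob (fiber E B Fo Fa b) = {e \<in> Ob E. Fo e = b}"
  by (simp add: fiber_def)

lemma fiber_zeta: "zeta (fiber E B Fo Fa b) e e' =
   of_nat (card {f \<in> Ar E. Fa f = Id B b \<and> Dom E f = e \<and> Cod E f = e'})"
  by (simp add: zeta_def hom_def fiber_def conj_assoc)

lemma fiber_w: "weighting {e \<in> Ob E. Fo e = b} {e \<in> Ob E. Fo e = b} (zeta (fiber E B Fo Fa b))
   (\<lambda>e. 1 / of_nat (D e))"
  unfolding weighting_def
proof
  let ?X = "{e \<in> Ob E. Fo e = b}"
  fix e assume e: "e \<in> ?X"
  let ?H = "\<lambda>e'. {f \<in> Ar E. Fa f = Id B b \<and> Dom E f = e \<and> Cod E f = e'}"
  let ?S = "{f \<in> Ar E. Dom E f = e \<and> Fa f = Id B (Fo e)}"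
  have bB: "b \<in> Ob B" using e F_ob by auto
  have trm: "of_nat (card (?H e')) * (1 / of_nat (D e')) = of_nat (card (?H e')) / (of_nat (D e) :: rat)"
    for e'
  proof (cases "?H e' = {}")
    case False
    then obtain f where f: "f \<in> ?H e'" by blast
    then have "D e = D e'" using fib_inv(1)[of f] e by auto
    then show ?thesis by simp
  next
    case True
    then have "card (?H e') = 0" by (simp only: card.empty)
    then show ?thesis by simp
  qed
  have "card ?S = (\<Sum>e'\<in>?X. card {f \<in> ?S. Cod E f = e'})"
  proof (rule card_group)
    show "finite ?S" using finE by auto
    show "finite ?X" using finE by auto
    show "Cod E ` ?S \<subseteq> ?X" using e bB by (auto simp: E_dc F_ar(3)[symmetric] B_id)
  qed
  also have "\<dots> = (\<Sum>e'\<in>?X. card (?H e'))"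
    using e by (intro sum.cong) (auto intro: arg_cong[where f=card])
  finally have cs: "D e = (\<Sum>e'\<in>?X. card (?H e'))" unfolding D_def .
  have "(\<Sum>e'\<in>?X. zeta (fiber E B Fo Fa b) e e' * (1 / of_nat (D e'))) =
        (\<Sum>e'\<in>?X. of_nat (card (?H e')) / (of_nat (D e) :: rat))"
    by (simp only: fiber_zeta trm)
  also have "\<dots> = of_nat (D e) / of_nat (D e)"
    by (simp add: cs sum_divide_distrib[symmetric])
  also have "\<dots> = 1" using D_pos[of e] e by simp
  finally show "(\<Sum>e'\<in>?X. zeta (fiber E B Fo Fa b) e e' * (1 / of_nat (D e'))) = 1" .
qed

end

context fibsetup begin

lemma fiber_cw: "coweighting {e \<in> Ob E. Fo e = b} {e \<in> Ob E. Fo e = b} (zeta (fiber E B Fo Fa b))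
   (\<lambda>e. 1 / of_nat (C e))"
  unfolding coweighting_def
proof
  let ?X = "{e \<in> Ob E. Fo e = b}"
  fix e' assume e': "e' \<in> ?X"
  let ?H = "\<lambda>e. {f \<in> Ar E. Fa f = Id B b \<and> Dom E f = e \<and> Cod E f = e'}"
  let ?S = "{f \<in> Ar E. Cod E f = e' \<and> Fa f = Id B (Fo e')}"
  have bB: "b \<in> Ob B" using e' F_ob by auto
  have trm: "(1 / of_nat (C e)) * of_nat (card (?H e)) = of_nat (card (?H e)) / (of_nat (C e') :: rat)"
    for e
  proof (cases "?H e = {}")
    case False
    then obtain f where f: "f \<in> ?H e" by blast
    have "Fo (Dom E f) = b" using f F_ar(2)[of f] B_id(2)[OF bB] by auto
    then have "C e = C e'" using fib_inv(2)[of f] e' f by auto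
    then show ?thesis by simp
  next
    case True
    then have "card (?H e) = 0" by (simp only: card.empty)
    then show ?thesis by simp
  qed
  have "card ?S = (\<Sum>e\<in>?X. card {f \<in> ?S. Dom E f = e})"
  proof (rule card_group)
    show "finite ?S" using finE by auto
    show "finite ?X" using finE by auto
    show "Dom E ` ?S \<subseteq> ?X" using e' bB by (auto simp: E_dc F_ar(2)[symmetric] B_id)
  qed
  also have "\<dots> = (\<Sum>e\<in>?X. card (?H e))"
    using e' by (intro sum.cong) (auto intro: arg_cong[where f=card])
  finally have cs: "C e' = (\<Sum>e\<in>?X. card (?H e))" unfolding C_def .
  have "(\<Sum>e\<in>?X. (1 / of_nat (C e)) * zeta (fiber E B Fo Fa b) e e') =
        (\<Sum>e\<in>?X. of_nat (card (?H e)) / (of_nat (C e') :: rat))"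
    by (simp only: fiber_zeta trm)
  also have "\<dots> = of_nat (C e') / of_nat (C e')"
    by (simp add: cs sum_divide_distrib[symmetric])
  also have "\<dots> = 1" using C_pos[of e'] e' by simp
  finally show "(\<Sum>e\<in>?X. (1 / of_nat (C e)) * zeta (fiber E B Fo Fa b) e e') = 1" .
qed

lemma fiber_euler: "has_euler_cat (fiber E B Fo Fa b)"
  unfolding has_euler_cat_def has_euler_mat_def fiber_Ob using fiber_w fiber_cw by blast

lemma fiber_chi: "chi (fiber E B Fo Fa b) = SD b"
  unfolding chi_def SD_def fiber_Ob
  by (rule euler_mat_eq) (use finE fiber_euler fiber_w in \<open>auto simp: has_euler_cat_def fiber_Ob\<close>)

lemma SD_SC: "SD b = SC b"
  unfolding SD_def SC_def
  by (rule weight_coweight_sum) (use finE fiber_w fiber_cw in auto)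

lemma const_step:
  assumes u: "u \<in> Ar B"
  shows "SC (Dom B u) = SD (Cod B u)"
proof -
  let ?b = "Dom B u" and ?b' = "Cod B u"
  let ?M = "{g \<in> Ar E. Fa g = u}"
  let ?X = "{e \<in> Ob E. Fo e = ?b}" and ?Y = "{e \<in> Ob E. Fo e = ?b'}"
  let ?t = "\<lambda>g. 1 / (of_nat (C (Dom E g)) * of_nat (D (Cod E g)) :: rat)"
  have finM: "finite ?M" using finE by auto
  have inner1: "1 / of_nat (C e) = (\<Sum>g\<in>{g \<in> ?M. Dom E g = e}. ?t g)" if e: "e \<in> ?X" for e
  proof -
    obtain g0 where g0: "g0 \<in> Ar E" "Dom E g0 = e" "Fa g0 = u" using cofib_lift[of e u] e u by auto
    have "{g \<in> ?M. Dom E g = e} = {g2 \<in> Ar E. Dom E g2 = Dom E g0 \<and> Fa g2 = Fa g0}" using g0 by auto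
    then have N: "card {g \<in> ?M. Dom E g = e} = D (Cod E g0)"
      using cocart_count[OF g0(1)] by simp
    have "(\<Sum>g\<in>{g \<in> ?M. Dom E g = e}. ?t g) =
          (\<Sum>g\<in>{g \<in> ?M. Dom E g = e}. 1 / (of_nat (C e) * of_nat (D (Cod E g0))))"
    proof (rule sum.cong)
      fix g assume g: "g \<in> {g \<in> ?M. Dom E g = e}"
      have "D (Cod E g) = D (Cod E g0)"
        using cocart_count[of g] cocart_count[OF g0(1)] g g0 by auto
      then show "?t g = 1 / (of_nat (C e) * of_nat (D (Cod E g0)))" using g by simp
    qed simp
    also have "\<dots> = of_nat (D (Cod E g0)) / (of_nat (C e) * of_nat (D (Cod E g0)))"
      using N by simp
    also have "\<dots> = 1 / of_nat (C e)"
      using D_pos[of "Cod E g0"] E_dc(2)[OF g0(1)] by simp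
    finally show ?thesis by simp
  qed
  have inner2: "1 / of_nat (D e') = (\<Sum>g\<in>{g \<in> ?M. Cod E g = e'}. ?t g)" if e': "e' \<in> ?Y" for e'
  proof -
    obtain g0 where g0: "g0 \<in> Ar E" "Cod E g0 = e'" "Fa g0 = u" using fib_lift[of e' u] e' u by auto
    have "{g \<in> ?M. Cod E g = e'} = {g2 \<in> Ar E. Cod E g2 = Cod E g0 \<and> Fa g2 = Fa g0}" using g0 by auto
    then have N: "card {g \<in> ?M. Cod E g = e'} = C (Dom E g0)"
      using cart_count[OF g0(1)] by simp
    have "(\<Sum>g\<in>{g \<in> ?M. Cod E g = e'}. ?t g) =
          (\<Sum>g\<in>{g \<in> ?M. Cod E g = e'}. 1 / (of_nat (C (Dom E g0)) * of_nat (D e')))"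
    proof (rule sum.cong)
      fix g assume g: "g \<in> {g \<in> ?M. Cod E g = e'}"
      have "C (Dom E g) = C (Dom E g0)"
        using cart_count[of g] cart_count[OF g0(1)] g g0 by auto
      then show "?t g = 1 / (of_nat (C (Dom E g0)) * of_nat (D e'))" using g by simp
    qed simp
    also have "\<dots> = of_nat (C (Dom E g0)) / (of_nat (C (Dom E g0)) * of_nat (D e'))"
      using N by simp
    also have "\<dots> = 1 / of_nat (D e')"
      using C_pos[of "Dom E g0"] E_dc(1)[OF g0(1)] by simp
    finally show ?thesis by simp
  qed
  have "SC ?b = (\<Sum>e\<in>?X. \<Sum>g\<in>{g \<in> ?M. Dom E g = e}. ?t g)"
    unfolding SC_def using inner1 by (rule sum.cong[OF refl])
  also have "\<dots> = (\<Sum>g\<in>?M. ?t g)"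
    by (rule sum.group) (use finM finE in \<open>auto simp: E_dc F_ar(2)[symmetric]\<close>)
  also have "\<dots> = (\<Sum>e'\<in>?Y. \<Sum>g\<in>{g \<in> ?M. Cod E g = e'}. ?t g)"
    by (rule sum.group[symmetric]) (use finM finE in \<open>auto simp: E_dc F_ar(3)[symmetric]\<close>)
  also have "\<dots> = SD ?b'"
    unfolding SD_def using inner2 by (intro sum.cong[OF refl]) simp
  finally show ?thesis .
qed

lemma E_weighting:
  assumes K: "\<forall>b\<in>Ob B. (\<Sum>b'\<in>Ob B. zeta B b b' * K b') = 1"
  shows "weighting (Ob E) (Ob E) (zeta E) (\<lambda>e. K (Fo e) / of_nat (D e))"
  unfolding weighting_def
proof
  fix e assume e: "e \<in> Ob E"
  let ?b = "Fo e"
  let ?A = "{g \<in> Ar E. Dom E g = e}"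
  let ?U = "{u \<in> Ar B. Dom B u = ?b}"
  let ?t = "\<lambda>g. K (Fo (Cod E g)) / (of_nat (D (Cod E g)) :: rat)"
  have finA: "finite ?A" using finE by auto
  have finU: "finite ?U" using finB by auto
  have "(\<Sum>e'\<in>Ob E. zeta E e e' * (K (Fo e') / of_nat (D e'))) =
        (\<Sum>e'\<in>Ob E. \<Sum>g\<in>{g \<in> ?A. Cod E g = e'}. ?t g)"
  proof (rule sum.cong[OF refl])
    fix e' assume "e' \<in> Ob E"
    have h: "{g \<in> ?A. Cod E g = e'} = hom E e e'" by (auto simp: hom_def)
    have "(\<Sum>g\<in>hom E e e'. ?t g) = (\<Sum>g\<in>hom E e e'. K (Fo e') / of_nat (D e'))"
      by (rule sum.cong) (auto simp: hom_def)
    then show "zeta E e e' * (K (Fo e') / of_nat (D e')) = (\<Sum>g\<in>{g \<in> ?A. Cod E g = e'}. ?t g)"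
      using h by (simp add: zeta_def)
  qed
  also have "\<dots> = (\<Sum>g\<in>?A. ?t g)"
    by (rule sum.group) (use finA finE in \<open>auto simp: E_dc\<close>)
  also have "\<dots> = (\<Sum>u\<in>?U. \<Sum>g\<in>{g \<in> ?A. Fa g = u}. ?t g)"
    by (rule sum.group[symmetric]) (use finA finU in \<open>auto simp: F_ar\<close>)
  also have "\<dots> = (\<Sum>u\<in>?U. K (Cod B u))"
  proof (rule sum.cong[OF refl])
    fix u assume u: "u \<in> ?U"
    obtain g0 where g0: "g0 \<in> Ar E" "Dom E g0 = e" "Fa g0 = u" using cofib_lift[of e u] e u by auto
    have "{g \<in> ?A. Fa g = u} = {g2 \<in> Ar E. Dom E g2 = Dom E g0 \<and> Fa g2 = Fa g0}" using g0 by auto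
    then have N: "card {g \<in> ?A. Fa g = u} = D (Cod E g0)"
      using cocart_count[OF g0(1)] by simp
    have "(\<Sum>g\<in>{g \<in> ?A. Fa g = u}. ?t g) = (\<Sum>g\<in>{g \<in> ?A. Fa g = u}. K (Cod B u) / of_nat (D (Cod E g0)))"
    proof (rule sum.cong)
      fix g assume g: "g \<in> {g \<in> ?A. Fa g = u}"
      have "D (Cod E g) = D (Cod E g0)"
        using cocart_count[of g] cocart_count[OF g0(1)] g g0 by auto
      moreover have "Fo (Cod E g) = Cod B u" using g F_ar(3) by auto
      ultimately show "?t g = K (Cod B u) / of_nat (D (Cod E g0))" by simp
    qed simp
    also have "\<dots> = of_nat (D (Cod E g0)) * (K (Cod B u) / of_nat (D (Cod E g0)))"
      using N by simp
    also have "\<dots> = K (Cod B u)"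
      using D_pos[of "Cod E g0"] E_dc(2)[OF g0(1)] by simp
    finally show "(\<Sum>g\<in>{g \<in> ?A. Fa g = u}. ?t g) = K (Cod B u)" .
  qed
  also have "\<dots> = (\<Sum>b'\<in>Ob B. \<Sum>u\<in>{u \<in> ?U. Cod B u = b'}. K (Cod B u))"
    by (rule sum.group[symmetric]) (use finU finB in \<open>auto simp: B_dc\<close>)
  also have "\<dots> = (\<Sum>b'\<in>Ob B. zeta B ?b b' * K b')"
  proof (rule sum.cong[OF refl])
    fix b' assume "b' \<in> Ob B"
    have h: "{u \<in> ?U. Cod B u = b'} = hom B ?b b'" by (auto simp: hom_def)
    have "(\<Sum>u\<in>hom B ?b b'. K (Cod B u)) = (\<Sum>u\<in>hom B ?b b'. K b')"
      by (rule sum.cong) (auto simp: hom_def)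
    then show "(\<Sum>u\<in>{u \<in> ?U. Cod B u = b'}. K (Cod B u)) = zeta B ?b b' * K b'"
      using h by (simp add: zeta_def)
  qed
  also have "\<dots> = 1" using K e F_ob by auto
  finally show "(\<Sum>e'\<in>Ob E. zeta E e e' * (K (Fo e') / of_nat (D e'))) = 1" .
qed

lemma chi_E:
  assumes hE: "has_euler_cat E"
    and K: "\<forall>b\<in>Ob B. (\<Sum>b'\<in>Ob B. zeta B b b' * K b') = 1"
  shows "chi E = (\<Sum>b\<in>Ob B. K b * SD b)"
proof -
  have "chi E = (\<Sum>e\<in>Ob E. K (Fo e) / of_nat (D e))"
    unfolding chi_def
    by (rule euler_mat_eq) (use finE hE E_weighting[OF K] in \<open>auto simp: has_euler_cat_def\<close>)
  also have "\<dots> = (\<Sum>b\<in>Ob B. \<Sum>e\<in>{e \<in> Ob E. Fo e = b}. K (Fo e) / of_nat (D e))"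
    by (rule sum.group[symmetric]) (use finE finB in \<open>auto simp: F_ob\<close>)
  also have "\<dots> = (\<Sum>b\<in>Ob B. K b * SD b)"
    unfolding SD_def by (intro sum.cong[OF refl]) (simp add: sum_distrib_left)
  finally show ?thesis .
qed

end


lemma conn_ob: "(x, y) \<in> (conn_rel C)\<^sup>* \<Longrightarrow> x \<in> Ob C \<Longrightarrow> y \<in> Ob C"
  by (induct rule: rtrancl_induct) (auto simp: conn_rel_def)

lemma conn_sym: "sym ((conn_rel C)\<^sup>*)"
  by (rule sym_rtrancl) (auto simp: sym_def conn_rel_def)

lemma conn_pair: "y \<in> (conn_rel C)\<^sup>* `` {x} \<Longrightarrow> z \<in> (conn_rel C)\<^sup>* `` {x} \<Longrightarrow> (y, z) \<in> (conn_rel C)\<^sup>*"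
  using conn_sym[of C] by (auto dest: symD intro: rtrancl_trans)

lemma cls_eq: "y \<in> (conn_rel C)\<^sup>* `` {x} \<Longrightarrow> (conn_rel C)\<^sup>* `` {y} = (conn_rel C)\<^sup>* `` {x}"
  using conn_sym[of C] by (auto dest: symD intro: rtrancl_trans)

lemma full_sub_Ob: "Ob (full_sub B S) = S" by (simp add: full_sub_def)

lemma full_sub_zeta: "x \<in> S \<Longrightarrow> y \<in> S \<Longrightarrow> zeta (full_sub B S) x y = zeta B x y"
  unfolding zeta_def hom_def full_sub_def by (auto intro!: arg_cong[where f=card])

context fibsetup begin

lemma SD_conn: "(x, y) \<in> (conn_rel B)\<^sup>* \<Longrightarrow> SD x = SD y"
proof (induct rule: rtrancl_induct)
  case (step y z)
  from step(2) obtain f where f: "f \<in> Ar B"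
    "(Dom B f = y \<and> Cod B f = z) \<or> (Dom B f = z \<and> Cod B f = y)"
    unfolding conn_rel_def by auto
  have "SD y = SD z" using f const_step[OF f(1)] SD_SC by auto
  then show ?case using step(3) by simp
qed simp

end

theorem corollary2p10:
  fixes E :: "('o, 'a) cat" and B :: "('p, 'b) cat"
    and Fo :: "'o \<Rightarrow> 'p" and Fa :: "'a \<Rightarrow> 'b"
    and sel :: "'p set \<Rightarrow> 'p"
  assumes "finite_category E" and "finite_category B"
    and "is_functor E B Fo Fa"
    and "fibered_in_groupoids E B Fo Fa"
    and "cofibered_in_groupoids E B Fo Fa"
    and "has_euler_cat E"
    and "\<forall>Bi\<in>components B. has_euler_cat (full_sub B Bi)"
    and "\<forall>Bi\<in>components B. sel Bi \<in> Bi"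
  shows "(\<forall>Bi\<in>components B. has_euler_cat (fiber E B Fo Fa (sel Bi))) \<and>
         chi E = (\<Sum>Bi\<in>components B. chi (full_sub B Bi) * chi (fiber E B Fo Fa (sel Bi)))"
proof -
  interpret fibsetup E B Fo Fa by (rule fibsetup.intro[OF assms(1-5)])
  define R where "R = (conn_rel B)\<^sup>*"
  define cls where "cls b = R `` {b}" for b
  define K where "K b = (SOME k. weighting (cls b) (cls b) (zeta (full_sub B (cls b))) k) b" for b
  have comp: "components B = cls ` Ob B"
    unfolding components_def quotient_def cls_def R_def by blast
  have cls_sub: "cls x \<subseteq> Ob B" if "x \<in> Ob B" for x
    using conn_ob[of x _ B] that unfolding cls_def R_def by auto
  have cls_self: "x \<in> cls x" for x unfolding cls_def R_def by blast
  have cls_eq': "y \<in> cls x \<Longrightarrow> cls y = cls x" for x y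
    unfolding cls_def R_def by (rule cls_eq)
  have Kw: "weighting (cls b) (cls b) (zeta (full_sub B (cls b)))
              (SOME k. weighting (cls b) (cls b) (zeta (full_sub B (cls b))) k)"
    if b: "b \<in> Ob B" for b
  proof -
    have "cls b \<in> components B" using comp b by blast
    then have "\<exists>k. weighting (cls b) (cls b) (zeta (full_sub B (cls b))) k"
      using assms(7) by (auto simp: has_euler_cat_def has_euler_mat_def full_sub_Ob)
    then show ?thesis by (rule someI_ex)
  qed
  have KB: "\<forall>b\<in>Ob B. (\<Sum>b'\<in>Ob B. zeta B b b' * K b') = 1"
  proof
    fix b assume b: "b \<in> Ob B"
    let ?w = "SOME k. weighting (cls b) (cls b) (zeta (full_sub B (cls b))) k"
    have "(\<Sum>b'\<in>Ob B. zeta B b b' * K b') = (\<Sum>b'\<in>cls b. zeta B b b' * K b')"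
    proof (rule sum.mono_neutral_right)
      show "finite (Ob B)" using finB by simp
      show "cls b \<subseteq> Ob B" using cls_sub b .
      show "\<forall>i\<in>Ob B - cls b. zeta B b i * K i = 0"
      proof
        fix i assume i: "i \<in> Ob B - cls b"
        have "hom B b i = {}"
        proof (rule ccontr)
          assume "hom B b i \<noteq> {}"
          then obtain f where "f \<in> Ar B" "Dom B f = b" "Cod B f = i" by (auto simp: hom_def)
          then have "(b, i) \<in> conn_rel B" using b i unfolding conn_rel_def by auto
          then have "i \<in> cls b" unfolding cls_def R_def by auto
          then show False using i by simp
        qed
        then show "zeta B b i * K i = 0" by (simp add: zeta_def)
      qed
    qed
    also have "\<dots> = (\<Sum>b'\<in>cls b. zeta (full_sub B (cls b)) b b' * ?w b')"
      by (rule sum.cong[OF refl]) (simp add: K_def cls_eq' full_sub_zeta cls_self)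
    also have "\<dots> = 1" using Kw[OF b] cls_self[of b] unfolding weighting_def by blast
    finally show "(\<Sum>b'\<in>Ob B. zeta B b b' * K b') = 1" .
  qed
  have chiB: "chi (full_sub B Bi) = (\<Sum>b\<in>Bi. K b)" if Bi: "Bi \<in> components B" for Bi
  proof -
    obtain x where x: "x \<in> Ob B" "Bi = cls x" using Bi comp by blast
    show ?thesis unfolding chi_def euler_mat_def full_sub_Ob K_def
      by (rule sum.cong[OF refl]) (simp add: x cls_eq')
  qed
  have "chi E = (\<Sum>b\<in>Ob B. K b * SD b)" by (rule chi_E[OF assms(6) KB])
  also have "\<dots> = (\<Sum>Bi\<in>cls ` Ob B. \<Sum>b\<in>{b \<in> Ob B. cls b = Bi}. K b * SD b)"
    by (rule sum.group[symmetric]) (use finB in auto)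
  also have "\<dots> = (\<Sum>Bi\<in>components B. chi (full_sub B Bi) * SD (sel Bi))"
    unfolding comp[symmetric]
  proof (rule sum.cong[OF refl])
    fix Bi assume Bi: "Bi \<in> components B"
    obtain x where x: "x \<in> Ob B" "Bi = cls x" using Bi comp by blast
    have set: "{b \<in> Ob B. cls b = Bi} = Bi"
      using x cls_sub[OF x(1)] cls_eq' cls_self by blast
    have "(\<Sum>b\<in>Bi. K b * SD b) = (\<Sum>b\<in>Bi. K b * SD (sel Bi))"
    proof (rule sum.cong[OF refl])
      fix b assume b: "b \<in> Bi"
      have "(sel Bi, b) \<in> R" using assms(8) Bi b x conn_pair unfolding cls_def R_def by metis
      then show "K b * SD b = K b * SD (sel Bi)" using SD_conn unfolding R_def by simp
    qed
    then show "(\<Sum>b\<in>{b \<in> Ob B. cls b = Bi}. K b * SD b) = chi (full_sub B Bi) * SD (sel Bi)"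
      by (simp add: set chiB[OF Bi] sum_distrib_right)
  qed
  finally show ?thesis using fiber_euler fiber_chi by simp
qed


end
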